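(* Let $k\ge1$, and let $\phi^1,\dots,\phi^k\in[0,1]^d$ be fixed feature attribution vectors (for a fixed input). Let $\mathcal{Q}(\phi)=\mathbb{E}_{\gamma_1,\gamma_2}\big[\lVert\gamma_1\phi-\gamma_2\rVert_2^2\big]$ be a generalized $L2$ metric given by random variables $\gamma_1\in\mathbb{R}^{g\times d}$, $\gamma_2\in\mathbb{R}^g$, and suppose that for all realizations $\lVert\gamma_1\rVert_1\le c_1$ and $\lVert\gamma_1\phi^i-\gamma_2\rVert_2^2\le c_2$ for all $i=1,\dots,k$. Let $\Omega=\{\omega\in\mathbb{R}^k:\omega_i\ge0,\ \sum_{i=1}^k\omega_i=1\}$ and $\phi^{\omega}=\sum_{i=1}^k\omega_i\phi^i$. Let $(\gamma_1^{(j)},\gamma_2^{(j)})$, $j=1,\dots,m$, be i.i.d. samples with the distribution of $(\gamma_1,\gamma_2)$, and let $$\hat\omega\in\arg\min_{\omega\in\Omega}\frac1m\sum_{j=1}^m\lVert\gamma_1^{(j)}\phi^{\omega}-\gamma_2^{(j)}\rVert_2^2.$$ Then there exists a constant $C=C(c_1,c_2)>0$ depending on $c_1$ and $c_2$ such that for every $\delta\in(0,1)$, with probability at least $1-\delta$ over the samples, $$\mathcal{Q}(\phi^{\hat\omega})-\min_{\omega\in\Omega}\mathcal{Q}(\phi^{\omega})\le C\sqrt{\frac{4\log(16k/\delta)}{m}}.$$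
   Context: Feature attributions are normalized, i.e. take values in $[0,1]^d$. A generalized $L2$ metric is a map $\mathcal{Q}:\mathbb{R}^d\to\mathbb{R}$ of the form $\mathcal{Q}(\phi)=\mathbb{E}[\lVert\gamma_1\phi-\gamma_2\rVert_2^2]$ for random $\gamma_1\in\mathbb{R}^{g\times d}$, $\gamma_2\in\mathbb{R}^g$. Here $\lVert\gamma_1\rVert_1$ denotes the sum of the absolute values of the entries of the matrix $\gamma_1$ (so that every entry of $\gamma_1\phi$ is bounded by $\lVert\gamma_1\rVert_1\lVert\phi\rVert_\infty$), and $\log$ is the natural logarithm. *)

theory Defs
  imports "HOL-Probability.Probability"
begin

text \<open>Matrices in R^{g x d} are represented as functions nat => nat => real (entries A i j,
  i < g, j < d), vectors in R^g / R^d as nat => real with index guards.\<close>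

type_synonym mat = "nat \<Rightarrow> nat \<Rightarrow> real"
type_synonym vec = "nat \<Rightarrow> real"

definition sqloss :: "nat \<Rightarrow> nat \<Rightarrow> mat \<Rightarrow> vec \<Rightarrow> vec \<Rightarrow> real" where
  "sqloss g d A b \<phi> = (\<Sum>i<g. ((\<Sum>j<d. A i j * \<phi> j) - b i)\<^sup>2)"

definition mat_l1 :: "nat \<Rightarrow> nat \<Rightarrow> mat \<Rightarrow> real" where
  "mat_l1 g d A = (\<Sum>i<g. \<Sum>j<d. \<bar>A i j\<bar>)"

definition genL2 :: "nat \<Rightarrow> nat \<Rightarrow> (mat \<times> vec) measure \<Rightarrow> vec \<Rightarrow> real" where
  "genL2 g d D \<phi> = (\<integral>x. sqloss g d (fst x) (snd x) \<phi> \<partial>D)"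

definition empL2 :: "nat \<Rightarrow> nat \<Rightarrow> nat \<Rightarrow> (nat \<Rightarrow> mat \<times> vec) \<Rightarrow> vec \<Rightarrow> real" where
  "empL2 g d m S \<phi> = (1 / real m) * (\<Sum>j<m. sqloss g d (fst (S j)) (snd (S j)) \<phi>)"

definition wsimplex :: "nat \<Rightarrow> (nat \<Rightarrow> real) set" where
  "wsimplex k = {\<omega>. (\<forall>i<k. 0 \<le> \<omega> i) \<and> (\<Sum>i<k. \<omega> i) = 1}"

definition comb :: "nat \<Rightarrow> (nat \<Rightarrow> vec) \<Rightarrow> (nat \<Rightarrow> real) \<Rightarrow> vec" where
  "comb k \<phi> \<omega> = (\<lambda>j. \<Sum>i<k. \<omega> i * \<phi> i j)"

end

theory Submission
  imports Defs
begin

lemma hoeff_prod: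
  fixes D :: "'a measure" and h :: "'a \<Rightarrow> real"
  assumes D: "prob_space D" and hm: "h \<in> borel_measurable D"
    and hb: "\<forall>x\<in>space D. \<bar>h x\<bar> \<le> c" and c: "c > 0" and m: "m \<ge> 1" and e: "\<epsilon> \<ge> 0"
  shows "measure (PiM {..<m} (\<lambda>_. D)) {S\<in>space (PiM {..<m} (\<lambda>_. D)).
            \<bar>(\<Sum>j<m. h (S j)) - real m * integral\<^sup>L D h\<bar> \<ge> \<epsilon>}
         \<le> 2 * exp (-2 * \<epsilon>\<^sup>2 / (real m * (2*c)\<^sup>2))"
proof -
  let ?P = "PiM {..<m} (\<lambda>_. D)"
  interpret P: prob_space ?P using D by (intro prob_space_PiM) auto
  have comp: "distr ?P D (\<lambda>S. S j) = D" if "j < m" for j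
    using distr_PiM_component[of "{..<m}" "\<lambda>_. D" j] D that by auto
  have ind0: "P.indep_vars (\<lambda>_. D) (\<lambda>j S. S j) {..<m}"
  proof (subst P.indep_vars_iff_distr_eq_PiM')
    show "{..<m} \<noteq> {}" using m by (auto simp: lessThan_empty_iff)
    show "(\<lambda>S. S i) \<in> measurable ?P D" if "i \<in> {..<m}" for i
      using that measurable_component_singleton[of i "{..<m}" "\<lambda>_. D"] by simp
    have "distr ?P ?P (\<lambda>x. \<lambda>i\<in>{..<m}. x i) = distr ?P ?P (\<lambda>x. x)"
      by (rule distr_cong) (auto simp: space_PiM PiE_def extensional_restrict)
    also have "\<dots> = ?P" by simp
    also have "?P = (\<Pi>\<^sub>M i\<in>{..<m}. distr ?P D (\<lambda>S. S i))"
      by (intro PiM_cong) (auto simp: comp)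
    finally show "distr ?P ?P (\<lambda>x. \<lambda>i\<in>{..<m}. x i) = (\<Pi>\<^sub>M i\<in>{..<m}. distr ?P D (\<lambda>S. S i))" .
  qed
  have ind: "P.indep_vars (\<lambda>_. borel) (\<lambda>j S. h (S j)) {..<m}"
    by (rule P.indep_vars_compose2[OF ind0]) (use hm in auto)
  interpret Hoeffding_ineq ?P "{..<m}" "\<lambda>j S. h (S j)" "\<lambda>_. -c" "\<lambda>_. c"
     "\<Sum>j<m. P.expectation (\<lambda>S. h (S j))"
  proof unfold_locales
    show "finite {..<m}" by simp
    show "P.indep_vars (\<lambda>_. borel) (\<lambda>j S. h (S j)) {..<m}" by (rule ind)
    fix i assume i: "i \<in> {..<m}"
    show "AE x in ?P. h (x i) \<in> {-c..c}"
      using hb i by (intro AE_I2) (fastforce simp: space_PiM PiE_def Pi_def abs_le_iff)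
  qed simp
  have ex: "P.expectation (\<lambda>S. h (S j)) = integral\<^sup>L D h" if "j < m" for j
  proof -
    have "P.expectation (\<lambda>S. h (S j)) = integral\<^sup>L (distr ?P D (\<lambda>S. S j)) h"
      by (rule integral_distr[symmetric]) (use hm that measurable_component_singleton[of j "{..<m}" "\<lambda>_. D"] in auto)
    also have "\<dots> = integral\<^sup>L D h" using comp[OF that] by simp
    finally show ?thesis .
  qed
  have mu: "(\<Sum>j<m. P.expectation (\<lambda>S. h (S j))) = real m * integral\<^sup>L D h"
    using ex by simp
  have pos: "(\<Sum>i\<in>{..<m}. (c - - c)\<^sup>2) > 0" using m c by simp
  have "(\<Sum>i\<in>{..<m}. (c - - c)\<^sup>2) = real m * (2*c)\<^sup>2" by simp
  then show ?thesis using Hoeffding_ineq_abs_ge[OF e pos] mu by simp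
qed


definition av :: "nat \<Rightarrow> mat \<Rightarrow> vec \<Rightarrow> vec \<Rightarrow> nat \<Rightarrow> real" where
  "av d A b \<psi> r = (\<Sum>j<d. A r j * \<psi> j) - b r"

definition Mq :: "nat \<Rightarrow> nat \<Rightarrow> mat \<Rightarrow> vec \<Rightarrow> vec \<Rightarrow> vec \<Rightarrow> real" where
  "Mq g d A b \<psi>1 \<psi>2 = (\<Sum>r<g. av d A b \<psi>1 r * av d A b \<psi>2 r)"

lemma sqloss_Mq: "sqloss g d A b \<psi> = Mq g d A b \<psi> \<psi>"
  unfolding sqloss_def Mq_def av_def by (simp add: power2_eq_square)

lemma abs_mult_le_half: "\<bar>a * b\<bar> \<le> (a\<^sup>2 + b\<^sup>2) / 2" for a b :: real
proof -
  have "0 \<le> (\<bar>a\<bar> - \<bar>b\<bar>)\<^sup>2" by simp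
  then show ?thesis by (simp add: power2_eq_square algebra_simps abs_mult)
qed

lemma Mq_bound: "\<bar>Mq g d A b \<psi>1 \<psi>2\<bar> \<le> (sqloss g d A b \<psi>1 + sqloss g d A b \<psi>2) / 2"
proof -
  have "\<bar>Mq g d A b \<psi>1 \<psi>2\<bar> \<le> (\<Sum>r<g. \<bar>av d A b \<psi>1 r * av d A b \<psi>2 r\<bar>)"
    unfolding Mq_def by (rule sum_abs)
  also have "\<dots> \<le> (\<Sum>r<g. ((av d A b \<psi>1 r)\<^sup>2 + (av d A b \<psi>2 r)\<^sup>2) / 2)"
    by (intro sum_mono abs_mult_le_half)
  also have "\<dots> = (sqloss g d A b \<psi>1 + sqloss g d A b \<psi>2) / 2"
    unfolding sqloss_def av_def by (simp add: sum_divide_distrib[symmetric] sum.distrib)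
  finally show ?thesis .
qed

lemma av_comb:
  assumes "\<omega> \<in> wsimplex k"
  shows "av d A b (comb k \<phi> \<omega>) r = (\<Sum>i<k. \<omega> i * av d A b (\<phi> i) r)"
proof -
  have s: "(\<Sum>i<k. \<omega> i) = 1" using assms by (simp add: wsimplex_def)
  have "(\<Sum>j<d. A r j * comb k \<phi> \<omega> j) = (\<Sum>i<k. \<omega> i * (\<Sum>j<d. A r j * \<phi> i j))"
    unfolding comb_def by (simp add: sum_distrib_left mult_ac sum.swap[of _ "{..<d}"])
  moreover have "b r = (\<Sum>i<k. \<omega> i * b r)" using s by (simp add: sum_distrib_right[symmetric])
  ultimately show ?thesis unfolding av_def by (simp add: right_diff_distrib sum_subtractf)
qed

lemma sq_comb:
  assumes "\<omega> \<in> wsimplex k"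
  shows "sqloss g d A b (comb k \<phi> \<omega>) = (\<Sum>i<k. \<Sum>l<k. \<omega> i * \<omega> l * Mq g d A b (\<phi> i) (\<phi> l))"
proof -
  have "sqloss g d A b (comb k \<phi> \<omega>) = (\<Sum>r<g. (\<Sum>i<k. \<omega> i * av d A b (\<phi> i) r) * (\<Sum>l<k. \<omega> l * av d A b (\<phi> l) r))"
    unfolding sqloss_Mq Mq_def av_comb[OF assms] ..
  also have "\<dots> = (\<Sum>r<g. \<Sum>i<k. \<Sum>l<k. \<omega> i * \<omega> l * (av d A b (\<phi> i) r * av d A b (\<phi> l) r))"
    by (simp add: sum_product mult_ac)
  also have "\<dots> = (\<Sum>i<k. \<Sum>l<k. \<omega> i * \<omega> l * Mq g d A b (\<phi> i) (\<phi> l))"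
    unfolding Mq_def sum_distrib_left
    by (subst sum.swap) (simp add: sum.swap[of _ "{..<g}"])
  finally show ?thesis .
qed

lemma quad_dev:
  assumes "\<omega> \<in> wsimplex k" and "\<And>i l. i < k \<Longrightarrow> l < k \<Longrightarrow> \<bar>e i l\<bar> \<le> t"
  shows "\<bar>\<Sum>i<k. \<Sum>l<k. \<omega> i * \<omega> l * e i l\<bar> \<le> t"
proof -
  have nn: "\<And>i. i < k \<Longrightarrow> 0 \<le> \<omega> i" and s: "(\<Sum>i<k. \<omega> i) = 1"
    using assms(1) by (auto simp: wsimplex_def)
  have "\<bar>\<Sum>i<k. \<Sum>l<k. \<omega> i * \<omega> l * e i l\<bar> \<le> (\<Sum>i<k. \<bar>\<Sum>l<k. \<omega> i * \<omega> l * e i l\<bar>)"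
    by (rule sum_abs)
  also have "\<dots> \<le> (\<Sum>i<k. \<Sum>l<k. \<bar>\<omega> i * \<omega> l * e i l\<bar>)"
    by (intro sum_mono sum_abs)
  also have "\<dots> \<le> (\<Sum>i<k. \<Sum>l<k. \<omega> i * \<omega> l * t)"
    by (intro sum_mono) (simp add: abs_mult nn assms(2) mult_left_mono)
  also have "\<dots> = t * (\<Sum>i<k. \<omega> i) * (\<Sum>l<k. \<omega> l)"
    by (simp add: sum_distrib_left sum_distrib_right mult_ac)
  also have "\<dots> = t" using s by simp
  finally show ?thesis .
qed


theorem theorem4p3:
  fixes c1 c2 :: real
  shows "\<exists>C>0. \<forall>(d::nat) (g::nat) (k::nat) (\<phi>::nat \<Rightarrow> vec) (D::(mat \<times> vec) measure)
            (m::nat) (\<omega>hat::(nat \<Rightarrow> mat \<times> vec) \<Rightarrow> (nat \<Rightarrow> real)) (\<delta>::real).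
     k \<ge> 1 \<longrightarrow> m \<ge> 1 \<longrightarrow>
     (\<forall>l<k. \<forall>j<d. 0 \<le> \<phi> l j \<and> \<phi> l j \<le> 1) \<longrightarrow>
     prob_space D \<longrightarrow>
     (\<forall>i j. (\<lambda>x. fst x i j) \<in> borel_measurable D) \<longrightarrow>
     (\<forall>i. (\<lambda>x. snd x i) \<in> borel_measurable D) \<longrightarrow>
     (\<forall>x\<in>space D. mat_l1 g d (fst x) \<le> c1) \<longrightarrow>
     (\<forall>x\<in>space D. \<forall>l<k. sqloss g d (fst x) (snd x) (\<phi> l) \<le> c2) \<longrightarrow>
     (\<forall>S\<in>space (PiM {..<m} (\<lambda>_. D)).
         \<omega>hat S \<in> wsimplex k \<and>
         (\<forall>\<omega>\<in>wsimplex k. empL2 g d m S (comb k \<phi> (\<omega>hat S)) \<le> empL2 g d m S (comb k \<phi> \<omega>))) \<longrightarrow>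
     0 < \<delta> \<longrightarrow> \<delta> < 1 \<longrightarrow>
     (\<exists>E\<in>sets (PiM {..<m} (\<lambda>_. D)).
         measure (PiM {..<m} (\<lambda>_. D)) E \<ge> 1 - \<delta> \<and>
         (\<forall>S\<in>E. genL2 g d D (comb k \<phi> (\<omega>hat S))
                    - (INF \<omega>\<in>wsimplex k. genL2 g d D (comb k \<phi> \<omega>))
                  \<le> C * sqrt (4 * ln (16 * real k / \<delta>) / real m)))"
proof -
  define c where "c = \<bar>c2\<bar> + 1"
  have c: "c > 0" "c2 \<le> c" unfolding c_def by auto
  show ?thesis
  proof (rule exI[of _ "2 * c"], intro conjI allI impI)
    show "0 < 2 * c" using c by simp
    fix d g k :: nat and \<phi> :: "nat \<Rightarrow> vec" and D :: "(mat \<times> vec) measure" and m :: nat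
      and \<omega>hat :: "(nat \<Rightarrow> mat \<times> vec) \<Rightarrow> (nat \<Rightarrow> real)" and \<delta> :: real
    assume k: "k \<ge> 1" and m: "m \<ge> 1" and D: "prob_space D"
      and m1: "\<forall>i j. (\<lambda>x. fst x i j) \<in> borel_measurable D"
      and m2: "\<forall>i. (\<lambda>x. snd x i) \<in> borel_measurable D"
      and bd: "\<forall>x\<in>space D. \<forall>l<k. sqloss g d (fst x) (snd x) (\<phi> l) \<le> c2"
      and opt: "\<forall>S\<in>space (PiM {..<m} (\<lambda>_. D)).
         \<omega>hat S \<in> wsimplex k \<and>
         (\<forall>\<omega>\<in>wsimplex k. empL2 g d m S (comb k \<phi> (\<omega>hat S)) \<le> empL2 g d m S (comb k \<phi> \<omega>))"
      and \<delta>: "0 < \<delta>" "\<delta> < 1"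
    let ?P = "PiM {..<m} (\<lambda>_. D)"
    interpret D: prob_space D by (rule D)
    interpret P: prob_space ?P using D by (intro prob_space_PiM) auto
    define L where "L = ln (16 * real k / \<delta>)"
    define t where "t = c * sqrt (4 * L / real m)"
    have L: "L > 0" unfolding L_def using k \<delta> by (simp add: field_simps)
    have mpos: "real m > 0" using m by simp
    have t: "t \<ge> 0" unfolding t_def using c L by simp
    define Mx where "Mx = (\<lambda>i l (x::mat \<times> vec). Mq g d (fst x) (snd x) (\<phi> i) (\<phi> l))"
    define EM where "EM = (\<lambda>i l. integral\<^sup>L D (Mx i l))"
    have m1': "(\<lambda>x. fst x i j) \<in> borel_measurable D" for i j using m1 by blast
    have m2': "(\<lambda>x. snd x i) \<in> borel_measurable D" for i using m2 by blast
    have Mxm [measurable]: "Mx i l \<in> borel_measurable D" for i l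
      unfolding Mx_def Mq_def av_def using m1' m2' by measurable
    have Mxb: "\<bar>Mx i l x\<bar> \<le> c" if "x \<in> space D" "i < k" "l < k" for i l x
    proof -
      have "\<bar>Mx i l x\<bar> \<le> (sqloss g d (fst x) (snd x) (\<phi> i) + sqloss g d (fst x) (snd x) (\<phi> l)) / 2"
        unfolding Mx_def by (rule Mq_bound)
      also have "\<dots> \<le> c"
      proof -
        have "sqloss g d (fst x) (snd x) (\<phi> i) \<le> c2" "sqloss g d (fst x) (snd x) (\<phi> l) \<le> c2"
          using bd that by auto
        then show ?thesis using c by simp
      qed
      finally show ?thesis .
    qed
    have Mxi: "integrable D (Mx i l)" if "i < k" "l < k" for i l
      by (rule D.integrable_const_bound[where B=c]) (use Mxb that in auto)
    define Bad where "Bad = (\<lambda>(i,l). {S\<in>space ?P. \<bar>(\<Sum>j<m. Mx i l (S j)) - real m * EM i l\<bar> \<ge> real m * t})"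
    have Bad_sets: "Bad p \<in> sets ?P" for p
    proof -
      obtain i l where p: "p = (i,l)" by fastforce
      have "(\<lambda>S. \<Sum>j<m. Mx i l (S j)) \<in> borel_measurable ?P"
      proof (intro borel_measurable_sum)
        fix j assume "j \<in> {..<m}"
        then show "(\<lambda>S. Mx i l (S j)) \<in> borel_measurable ?P"
          using measurable_compose[OF measurable_component_singleton[of j "{..<m}" "\<lambda>_. D"] Mxm] by simp
      qed
      then show ?thesis unfolding Bad_def p by simp
    qed
    have Bad_prob: "measure ?P (Bad p) \<le> \<delta> / (real k)\<^sup>2" if pin: "p \<in> {..<k} \<times> {..<k}" for p
    proof -
      obtain i l where p: "p = (i,l)" and il: "i < k" "l < k" using pin by fastforce
      have "measure ?P (Bad p) \<le> 2 * exp (-2 * (real m * t)\<^sup>2 / (real m * (2*c)\<^sup>2))"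
        unfolding Bad_def p EM_def using hoeff_prod[OF D Mxm[of i l], of c m "real m * t"] Mxb il c m t
        by simp
      also have "-2 * (real m * t)\<^sup>2 / (real m * (2*c)\<^sup>2) = -2 * L"
        unfolding t_def using c mpos L by (simp add: power2_eq_square field_simps)
      also have "exp (-2 * L) = (\<delta> / (16 * real k))\<^sup>2"
      proof -
        have eL: "exp L = 16 * real k / \<delta>" unfolding L_def using k \<delta> by simp
        have "exp (-2 * L) = exp (-L) * exp (-L)" by (simp add: exp_add[symmetric])
        also have "\<dots> = inverse (exp L) * inverse (exp L)" by (simp add: exp_minus)
        finally show ?thesis unfolding eL by (simp add: power2_eq_square)
      qed
      also have "2 * (\<delta> / (16 * real k))\<^sup>2 \<le> \<delta> / (real k)\<^sup>2"
        using k \<delta> by (simp add: power2_eq_square field_simps)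
      finally show ?thesis by simp
    qed
    define E where "E = space ?P - (\<Union>p\<in>{..<k} \<times> {..<k}. Bad p)"
    have Ebad: "(\<Union>p\<in>{..<k} \<times> {..<k}. Bad p) \<in> sets ?P" using Bad_sets by blast
    have Esets: "E \<in> sets ?P" unfolding E_def using Ebad by blast
    have "measure ?P (\<Union>p\<in>{..<k} \<times> {..<k}. Bad p) \<le> (\<Sum>p\<in>{..<k} \<times> {..<k}. measure ?P (Bad p))"
      by (rule measure_UNION_le) (auto simp: Bad_sets)
    also have "\<dots> \<le> (\<Sum>p\<in>{..<k} \<times> {..<k}. \<delta> / (real k)\<^sup>2)"
      by (rule sum_mono) (rule Bad_prob)
    also have "\<dots> = \<delta>" using k by (simp add: power2_eq_square)
    finally have Eprob: "measure ?P E \<ge> 1 - \<delta>"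
      unfolding E_def using P.prob_compl[OF Ebad] by simp
    have gen: "genL2 g d D (comb k \<phi> \<omega>) = (\<Sum>i<k. \<Sum>l<k. \<omega> i * \<omega> l * EM i l)"
      if "\<omega> \<in> wsimplex k" for \<omega>
    proof -
      have "genL2 g d D (comb k \<phi> \<omega>) = (\<integral>x. (\<Sum>i<k. \<Sum>l<k. \<omega> i * \<omega> l * Mx i l x) \<partial>D)"
        unfolding genL2_def Mx_def sq_comb[OF that] ..
      also have "\<dots> = (\<Sum>i<k. \<integral>x. (\<Sum>l<k. \<omega> i * \<omega> l * Mx i l x) \<partial>D)"
        by (rule Bochner_Integration.integral_sum[where f="\<lambda>i x. \<Sum>l<k. \<omega> i * \<omega> l * Mx i l x"]) (use Mxi in \<open>auto intro!: Bochner_Integration.integrable_sum Bochner_Integration.integrable_mult_right\<close>)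
      also have "\<dots> = (\<Sum>i<k. \<Sum>l<k. \<omega> i * \<omega> l * EM i l)"
      proof (rule sum.cong[OF refl])
        fix i assume i: "i \<in> {..<k}"
        have "(\<integral>x. (\<Sum>l<k. \<omega> i * \<omega> l * Mx i l x) \<partial>D) = (\<Sum>l<k. \<integral>x. \<omega> i * \<omega> l * Mx i l x \<partial>D)"
          by (rule Bochner_Integration.integral_sum[where f="\<lambda>l x. \<omega> i * \<omega> l * Mx i l x"]) (use i Mxi in \<open>auto intro!: Bochner_Integration.integrable_mult_right\<close>)
        then show "(\<integral>x. (\<Sum>l<k. \<omega> i * \<omega> l * Mx i l x) \<partial>D) = (\<Sum>l<k. \<omega> i * \<omega> l * EM i l)"
          by (simp add: EM_def)
      qed
      finally show ?thesis .
    qed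
    have emp: "empL2 g d m S (comb k \<phi> \<omega>) = (\<Sum>i<k. \<Sum>l<k. \<omega> i * \<omega> l * ((\<Sum>j<m. Mx i l (S j)) / real m))"
      if "\<omega> \<in> wsimplex k" for \<omega> S
      unfolding empL2_def Mx_def sq_comb[OF that]
      by (simp add: sum_distrib_left sum_divide_distrib sum.swap[of _ "{..<m}"] mult_ac)
    have dev: "\<bar>empL2 g d m S (comb k \<phi> \<omega>) - genL2 g d D (comb k \<phi> \<omega>)\<bar> \<le> t"
      if "S \<in> E" "\<omega> \<in> wsimplex k" for S \<omega>
    proof -
      have "\<bar>(\<Sum>j<m. Mx i l (S j)) / real m - EM i l\<bar> \<le> t" if "i < k" "l < k" for i l
      proof -
        have "\<bar>(\<Sum>j<m. Mx i l (S j)) - real m * EM i l\<bar> < real m * t"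
          using \<open>S \<in> E\<close> that unfolding E_def Bad_def by force
        then have "\<bar>(\<Sum>j<m. Mx i l (S j)) - real m * EM i l\<bar> / real m \<le> t"
          using mpos by (simp add: field_simps)
        moreover have "(\<Sum>j<m. Mx i l (S j)) / real m - EM i l = ((\<Sum>j<m. Mx i l (S j)) - real m * EM i l) / real m"
          using mpos by (simp add: field_simps)
        ultimately show ?thesis by simp
      qed
      then have "\<bar>\<Sum>i<k. \<Sum>l<k. \<omega> i * \<omega> l * ((\<Sum>j<m. Mx i l (S j)) / real m - EM i l)\<bar> \<le> t"
        by (intro quad_dev[OF that(2)])
      then show ?thesis
        unfolding emp[OF that(2)] gen[OF that(2)]
        by (simp add: sum_subtractf right_diff_distrib)
    qed
    show "\<exists>E\<in>sets ?P. measure ?P E \<ge> 1 - \<delta> \<and>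
         (\<forall>S\<in>E. genL2 g d D (comb k \<phi> (\<omega>hat S))
                    - (INF \<omega>\<in>wsimplex k. genL2 g d D (comb k \<phi> \<omega>))
                  \<le> 2 * c * sqrt (4 * ln (16 * real k / \<delta>) / real m))"
    proof (intro bexI[OF _ Esets] conjI ballI)
      show "measure ?P E \<ge> 1 - \<delta>" by (rule Eprob)
      fix S assume S: "S \<in> E"
      then have Ssp: "S \<in> space ?P" unfolding E_def by blast
      have wh: "\<omega>hat S \<in> wsimplex k" using opt Ssp by blast
      have ne: "wsimplex k \<noteq> {}"
      proof -
        have "(\<lambda>i. if i = 0 then 1 else 0) \<in> wsimplex k"
          using k by (simp add: wsimplex_def)
        then show ?thesis by blast
      qed
      have "genL2 g d D (comb k \<phi> (\<omega>hat S)) - 2 * t \<le> (INF \<omega>\<in>wsimplex k. genL2 g d D (comb k \<phi> \<omega>))"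
      proof (rule cINF_greatest[OF ne])
        fix \<omega> assume w: "\<omega> \<in> wsimplex k"
        have "empL2 g d m S (comb k \<phi> (\<omega>hat S)) \<le> empL2 g d m S (comb k \<phi> \<omega>)"
          using opt Ssp w by blast
        then show "genL2 g d D (comb k \<phi> (\<omega>hat S)) - 2 * t \<le> genL2 g d D (comb k \<phi> \<omega>)"
          using dev[OF S w] dev[OF S wh] by linarith
      qed
      then show "genL2 g d D (comb k \<phi> (\<omega>hat S)) - (INF \<omega>\<in>wsimplex k. genL2 g d D (comb k \<phi> \<omega>))
                  \<le> 2 * c * sqrt (4 * ln (16 * real k / \<delta>) / real m)"
        unfolding t_def L_def by simp
    qed
  qed
qed

end
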